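(* Let $\mathsf G=(\mathsf V,\mathsf E)$ be a finite connected graph without loops or multiple edges, with discrete Laplacian $\mathcal L=\mathcal I\mathcal I^T$ acting on $\ell^2(\mathsf V)$. The following assertions are equivalent: (i) $\mathsf G$ is complete; (ii) the semigroup $(e^{-t\mathcal L^2})_{t\ge 0}$ is positive, i.e. $e^{-t\mathcal L^2}f$ has nonnegative entries for all $t\ge0$ and all $f$ with nonnegative entries; (iii) the semigroup $(e^{-t\mathcal L^2})_{t\ge0}$ is $\ell^\infty$-contractive, i.e. $\|e^{-t\mathcal L^2}f\|_\infty\le\|f\|_\infty$ for all $t\ge0$ and all $f\in\mathbb C^V$.
   Context: $V=|\mathsf V|$ and $\ell^2(\mathsf V)=\mathbb C^V$. After fixing an arbitrary orientation of the edges, the incidence matrix $\mathcal I\in\mathbb R^{V\times E}$ has entries $\iota_{\mathsf v\mathsf e}=-1$ if $\mathsf v$ is the initial endpoint of $\mathsf e$, $+1$ if $\mathsf v$ is the terminal endpoint of $\mathsf e$, and $0$ otherwise; $\mathcal L=\mathcal I\mathcal I^T$ is the discrete Laplacian (independent of the orientation). A graph is complete if every pair of distinct vertices is joined by exactly one edge. *)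

theory Defs
  imports "HOL-Analysis.Analysis"
begin

definition simple_graph :: "('v \<Rightarrow> 'v \<Rightarrow> bool) \<Rightarrow> bool" where
  "simple_graph E \<longleftrightarrow> (\<forall>u v. E u v \<longrightarrow> E v u) \<and> (\<forall>v. \<not> E v v)"

definition connected_graph :: "('v \<Rightarrow> 'v \<Rightarrow> bool) \<Rightarrow> bool" where
  "connected_graph E \<longleftrightarrow> (\<forall>u v. E\<^sup>*\<^sup>* u v)"

definition complete_graph :: "('v \<Rightarrow> 'v \<Rightarrow> bool) \<Rightarrow> bool" where
  "complete_graph E \<longleftrightarrow> (\<forall>u v. u \<noteq> v \<longrightarrow> E u v)"

text \<open>Discrete Laplacian L = I I^T, written out entrywise: the (u,u) entry is the
  degree of u, the (u,v) entry (u \<noteq> v) is -1 if u,v adjacent and 0 otherwise.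
  This is independent of the orientation chosen for the incidence matrix.\<close>

definition laplacian :: "('v::finite \<Rightarrow> 'v \<Rightarrow> bool) \<Rightarrow> real^'v^'v" where
  "laplacian E = (\<chi> u v. if u = v then real (card {w. E u w})
                          else if E u v then -1 else 0)"

definition mat_pow :: "real^'n^'n \<Rightarrow> nat \<Rightarrow> real^'n^'n" where
  "mat_pow A k = ((\<lambda>B. A ** B) ^^ k) (mat 1)"

definition mat_exp :: "real^'n^'n \<Rightarrow> real^'n^'n" where
  "mat_exp A = (\<Sum>k. (1 / fact k) *\<^sub>R mat_pow A k)"

definition mat_act :: "real^'v^'v \<Rightarrow> ('v::finite \<Rightarrow> complex) \<Rightarrow> 'v \<Rightarrow> complex" where
  "mat_act M f = (\<lambda>u. \<Sum>v\<in>UNIV. complex_of_real (M $ u $ v) * f v)"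

definition sup_norm :: "('v::finite \<Rightarrow> complex) \<Rightarrow> real" where
  "sup_norm f = Max (range (\<lambda>v. cmod (f v)))"

end

theory Submission
  imports Defs
begin

lemma mm_entry: "(A ** B) $ i $ j = (\<Sum>k\<in>UNIV. A $ i $ k * B $ k $ j)"
  by (simp add: matrix_matrix_mult_def)

lemma mat_pow_0[simp]: "mat_pow A 0 = mat 1" by (simp add: mat_pow_def)
lemma mat_pow_Suc: "mat_pow A (Suc k) = A ** mat_pow A k" by (simp add: mat_pow_def)

lemma mat1_entry[simp]: "(mat 1 :: real^'n^'n) $ i $ j = (if i = j then 1 else 0)"
  by (simp add: mat_def)

lemma scale_mm: "((c::real) *\<^sub>R A) ** (B::real^'n^'n) = c *\<^sub>R (A ** B)"
  by (simp add: vec_eq_iff mm_entry sum_distrib_left mult_ac)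

lemma mm_scale: "(A::real^'n^'n) ** ((c::real) *\<^sub>R B) = c *\<^sub>R (A ** B)"
  by (simp add: vec_eq_iff mm_entry sum_distrib_left mult_ac)

lemma mat_pow_scale: "mat_pow ((c::real) *\<^sub>R A) k = c ^ k *\<^sub>R mat_pow (A::real^'n^'n) k"
  by (induction k) (simp_all add: mat_pow_Suc scale_mm mm_scale)

lemma mat_pow_idem: "(Q::real^'n^'n) ** Q = Q \<Longrightarrow> mat_pow Q k = (if k = 0 then mat 1 else Q)"
proof (induction k)
  case (Suc k) then show ?case by (cases k) (simp_all add: mat_pow_Suc matrix_mul_rid)
qed simp

lemma sums_mat:
  fixes f :: "nat \<Rightarrow> real^'n^'m"
  assumes "\<And>i j. (\<lambda>k. f k $ i $ j) sums s i j"
  shows "f sums (\<chi> i j. s i j)"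
proof -
  have e: "(\<Sum>k<n. f k) = (\<chi> i j. \<Sum>k<n. f k $ i $ j)" for n by (simp add: vec_eq_iff)
  show ?thesis unfolding sums_def e
    by (intro tendsto_vec_lambda) (use assms in \<open>simp add: sums_def\<close>)
qed

definition msz :: "real^'n^'n \<Rightarrow> real" where
  "msz A = (\<Sum>i\<in>UNIV. \<Sum>j\<in>UNIV. \<bar>A $ i $ j\<bar>)"

lemma msz_ge: "\<bar>A $ i $ j\<bar> \<le> msz A"
proof -
  have "\<bar>A $ i $ j\<bar> \<le> (\<Sum>j\<in>UNIV. \<bar>A $ i $ j\<bar>)"
    by (rule member_le_sum) auto
  also have "\<dots> \<le> msz A" unfolding msz_def
    by (rule member_le_sum[where f = "\<lambda>i. \<Sum>j\<in>UNIV. \<bar>A $ i $ j\<bar>"]) (auto intro: sum_nonneg)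
  finally show ?thesis .
qed

lemma msz_row: "(\<Sum>j\<in>UNIV. \<bar>A $ i $ j\<bar>) \<le> msz A"
  unfolding msz_def
  by (rule member_le_sum[where f = "\<lambda>i. \<Sum>j\<in>UNIV. \<bar>A $ i $ j\<bar>"]) (auto intro: sum_nonneg)

lemma msz_nonneg: "0 \<le> msz A" unfolding msz_def by (auto intro: sum_nonneg)

lemma mat_pow_bound: "\<bar>mat_pow A k $ i $ j\<bar> \<le> msz A ^ k"
proof (induction k arbitrary: i j)
  case 0 then show ?case by simp
next
  case (Suc k)
  have "\<bar>mat_pow A (Suc k) $ i $ j\<bar> \<le> (\<Sum>w\<in>UNIV. \<bar>A $ i $ w\<bar> * \<bar>mat_pow A k $ w $ j\<bar>)"
    unfolding mat_pow_Suc mm_entry by (rule order_trans[OF sum_abs]) (simp add: abs_mult)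
  also have "\<dots> \<le> (\<Sum>w\<in>UNIV. \<bar>A $ i $ w\<bar> * msz A ^ k)"
    by (intro sum_mono mult_left_mono Suc.IH) auto
  also have "\<dots> = (\<Sum>w\<in>UNIV. \<bar>A $ i $ w\<bar>) * msz A ^ k" by (simp add: sum_distrib_right)
  also have "\<dots> \<le> msz A * msz A ^ k"
    by (intro mult_right_mono msz_row) (simp add: msz_nonneg)
  finally show ?case by simp
qed

lemma entry_summable: "summable (\<lambda>k. (1 / fact k) * mat_pow A k $ i $ j)"
proof (rule summable_comparison_test')
  show "summable (\<lambda>k. inverse (fact k) * msz A ^ k)" by (rule summable_exp)
  fix k :: nat
  show "norm ((1 / fact k) * mat_pow A k $ i $ j) \<le> inverse (fact k) * msz A ^ k"
    using mat_pow_bound[of A k i j] by (simp add: abs_mult divide_inverse mult_left_mono)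
qed

lemma mat_exp_entry: "(\<lambda>k. (1 / fact k) * mat_pow A k $ i $ j) sums (mat_exp A $ i $ j)"
proof -
  let ?f = "\<lambda>k. (1 / fact k) *\<^sub>R mat_pow A k"
  have "?f sums (\<chi> i j. suminf (\<lambda>k. (1 / fact k) * mat_pow A k $ i $ j))"
    by (rule sums_mat) (use summable_sums[OF entry_summable[of A]] in simp)
  then have "mat_exp A = (\<chi> i j. suminf (\<lambda>k. (1 / fact k) * mat_pow A k $ i $ j))"
    unfolding mat_exp_def by (rule sums_unique[symmetric])
  then show ?thesis using summable_sums[OF entry_summable[of A i j]] by simp
qed


lemma mat_pow_rowsum:
  assumes "\<And>u. (\<Sum>v\<in>UNIV. (A::real^'n^'n) $ u $ v) = 0"
  shows "(\<Sum>v\<in>UNIV. mat_pow A k $ u $ v) = (if k = 0 then 1 else 0)"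
proof (induction k arbitrary: u)
  case 0 then show ?case by simp
next
  case (Suc k)
  have "(\<Sum>v\<in>UNIV. mat_pow A (Suc k) $ u $ v)
      = (\<Sum>w\<in>UNIV. A $ u $ w * (\<Sum>v\<in>UNIV. mat_pow A k $ w $ v))"
    unfolding mat_pow_Suc mm_entry by (simp add: sum_distrib_left) (rule sum.swap)
  also have "\<dots> = (\<Sum>w\<in>UNIV. A $ u $ w) * (if k = 0 then 1 else 0)"
    by (simp add: Suc.IH sum_distrib_right)
  also have "\<dots> = 0" using assms by simp
  finally show ?case by simp
qed

lemma mat_exp_rowsum:
  assumes "\<And>u. (\<Sum>v\<in>UNIV. (A::real^'n^'n) $ u $ v) = 0"
  shows "(\<Sum>v\<in>UNIV. mat_exp A $ u $ v) = 1"
proof -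
  have "(\<lambda>k. \<Sum>v\<in>UNIV. (1 / fact k) * mat_pow A k $ u $ v) sums (\<Sum>v\<in>UNIV. mat_exp A $ u $ v)"
    by (rule sums_sum) (rule mat_exp_entry)
  moreover have "(\<lambda>k. \<Sum>v\<in>UNIV. (1 / fact k) * mat_pow A k $ u $ v) = (\<lambda>k. if k = 0 then 1 else 0)"
    by (simp add: fun_eq_iff sum_distrib_left[symmetric] sum_divide_distrib[symmetric] mat_pow_rowsum[OF assms])
  moreover have "(\<lambda>k::nat. if k = 0 then 1 else 0) sums (1::real)"
    using sums_single[of 0 "\<lambda>_. 1::real"] by simp
  ultimately show ?thesis using sums_unique2 by metis
qed

lemma lap_entry: "laplacian E $ u $ v = (if u = v then real (card {w. E u w}) else if E u v then -1 else 0)"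
  by (simp add: laplacian_def)

lemma lap_rowsum:
  fixes E :: "'v::finite \<Rightarrow> 'v \<Rightarrow> bool"
  assumes "simple_graph E"
  shows "(\<Sum>v\<in>UNIV. laplacian E $ u $ v) = 0"
proof -
  have nl: "\<not> E u u" using assms by (simp add: simple_graph_def)
  have "(\<Sum>v\<in>UNIV. laplacian E $ u $ v)
     = (\<Sum>v\<in>UNIV. (if u = v then real (card {w. E u w}) else 0) + (if E u v then -1 else 0))"
    by (rule sum.cong) (use nl in \<open>auto simp: lap_entry\<close>)
  also have "\<dots> = real (card {w. E u w}) - real (card {w. E u w})"
    by (simp add: sum.distrib sum.If_cases)
  finally show ?thesis by simp
qed

lemma mm_rowsum:
  assumes "\<And>u. (\<Sum>v\<in>UNIV. (B::real^'n^'n) $ u $ v) = 0"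
  shows "(\<Sum>v\<in>UNIV. (A ** B) $ u $ v) = 0"
proof -
  have "(\<Sum>v\<in>UNIV. (A ** B) $ u $ v) = (\<Sum>w\<in>UNIV. A $ u $ w * (\<Sum>v\<in>UNIV. B $ w $ v))"
    unfolding mm_entry by (simp add: sum_distrib_left) (rule sum.swap)
  then show ?thesis using assms by simp
qed

lemma S_rowsum:
  fixes E :: "'v::finite \<Rightarrow> 'v \<Rightarrow> bool"
  assumes "simple_graph E"
  shows "(\<Sum>v\<in>UNIV. mat_exp ((- t) *\<^sub>R (laplacian E ** laplacian E)) $ u $ v) = 1"
proof (rule mat_exp_rowsum)
  fix u
  show "(\<Sum>v\<in>UNIV. ((- t) *\<^sub>R (laplacian E ** laplacian E)) $ u $ v) = 0"
    using mm_rowsum[OF lap_rowsum[OF assms], of "laplacian E" u]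
    by (simp add: sum_negf sum_distrib_left[symmetric])
qed

lemma dist2:
  fixes E :: "'v \<Rightarrow> 'v \<Rightarrow> bool"
  assumes "simple_graph E" "connected_graph E" "\<not> complete_graph E"
  shows "\<exists>u v w. u \<noteq> v \<and> \<not> E u v \<and> E u w \<and> E w v"
proof -
  obtain x y where xy: "x \<noteq> y" "\<not> E x y" using assms(3) by (auto simp: complete_graph_def)
  have "E\<^sup>*\<^sup>* x y" using assms(2) by (simp add: connected_graph_def)
  have "z = x \<or> E x z \<or> (\<exists>u v w. u \<noteq> v \<and> \<not> E u v \<and> E u w \<and> E w v)" if "E\<^sup>*\<^sup>* x z" for z
    using that
  proof (induction rule: rtranclp_induct)
    case base then show ?case by simp
  next
    case (step y z)
    show ?case
    proof (cases "z = x \<or> E x z")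
      case True then show ?thesis by blast
    next
      case False
      from step.IH consider "y = x" | "E x y" | "\<exists>u v w. u \<noteq> v \<and> \<not> E u v \<and> E u w \<and> E w v" by blast
      then show ?thesis
      proof cases
        case 1 then show ?thesis using step.hyps(2) False by simp
      next
        case 2
        have "x \<noteq> z \<and> \<not> E x z \<and> E x y \<and> E y z" using 2 False step.hyps(2) by auto
        then show ?thesis by blast
      next
        case 3 then show ?thesis by blast
      qed
    qed
  qed
  then show ?thesis using xy \<open>E\<^sup>*\<^sup>* x y\<close> by blast
qed

lemma L2_pos:
  fixes E :: "'v::finite \<Rightarrow> 'v \<Rightarrow> bool"
  assumes sg: "simple_graph E" and uv: "u \<noteq> v" "\<not> E u v" and w: "E u w" "E w v"
  shows "(laplacian E ** laplacian E) $ u $ v > 0"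
proof -
  have sym: "\<And>a b. E a b \<Longrightarrow> E b a" and irr: "\<And>a. \<not> E a a" using sg by (auto simp: simple_graph_def)
  have wu: "w \<noteq> u" "w \<noteq> v" using w irr by auto
  show ?thesis unfolding mm_entry
  proof (rule sum_pos2[of UNIV w])
    show "0 < laplacian E $ u $ w * laplacian E $ w $ v" using wu w by (simp add: lap_entry)
    fix i :: 'v
    show "0 \<le> laplacian E $ u $ i * laplacian E $ i $ v"
      using uv sym by (auto simp: lap_entry)

  qed auto
qed


lemma neg_entry:
  fixes A :: "real^'n^'n"
  assumes uv: "u \<noteq> v" and a: "A $ u $ v > 0"
  shows "\<exists>t>0. mat_exp ((- t) *\<^sub>R A) $ u $ v < 0"
proof -
  define M where "M = msz A"
  define a where "a = A $ u $ v"
  have aM: "a \<le> M" using msz_ge[of A u v] a unfolding M_def a_def by simp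
  have a0: "a > 0" using a a_def by simp
  have M0: "M > 0" using aM a0 by simp
  define t where "t = a / (4 * M^2)"
  have t0: "t > 0" using a0 M0 by (simp add: t_def)
  have tM: "t * M \<le> 1/2"
  proof -
    have "t * M = a / (4 * M)" using M0 by (simp add: t_def power2_eq_square field_simps)
    also have "\<dots> \<le> M / (4 * M)" using aM M0 by (intro divide_right_mono) auto
    also have "\<dots> = 1/4" using M0 by simp
    finally show ?thesis by simp
  qed
  have tM0: "0 \<le> t * M" using t0 M0 by simp
  define g where "g k = (1 / fact k) * mat_pow ((- t) *\<^sub>R A) k $ u $ v" for k
  have gs: "g sums (mat_exp ((- t) *\<^sub>R A) $ u $ v)" unfolding g_def by (rule mat_exp_entry)
  have g0: "g 0 = 0" using uv by (simp add: g_def)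
  have g1: "g 1 = - t * a"
    by (simp add: g_def mat_pow_scale a_def mat_pow_Suc[of _ 0, simplified] matrix_mul_rid)
  have sg: "summable g" using gs by (rule sums_summable)
  have split: "mat_exp ((- t) *\<^sub>R A) $ u $ v = (\<Sum>n. g (n + 2)) + (g 0 + g 1)"
    using suminf_split_initial_segment[OF sg, of 2] sums_unique[OF gs]
    by (simp add: numeral_2_eq_2)
  define b where "b n = (t * M)^2 * (1/2)^n" for n
  have bs: "b sums ((t * M)^2 * 2)"
    unfolding b_def using sums_mult[OF geometric_sums[of "1/2::real"], of "(t*M)^2"] by simp
  have hb: "g (n + 2) \<le> b n" for n
  proof -
    have "g (n+2) \<le> \<bar>g (n+2)\<bar>" by simp
    also have "\<dots> = (1 / fact (n+2)) * (t ^ (n+2) * \<bar>mat_pow A (n+2) $ u $ v\<bar>)"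
      using t0 unfolding g_def mat_pow_scale by (simp add: abs_mult power_abs)
    also have "\<dots> \<le> 1 * (t ^ (n+2) * M ^ (n+2))"
    proof (rule mult_mono)
      show "1 / fact (n + 2) \<le> (1::real)" using fact_ge_1[of "n+2", where 'a=real] by (simp add: divide_le_eq_1)
      show "t ^ (n + 2) * \<bar>mat_pow A (n + 2) $ u $ v\<bar> \<le> t ^ (n + 2) * M ^ (n + 2)"
        using t0 mat_pow_bound[of A "n+2" u v] by (intro mult_left_mono) (auto simp: M_def)
    qed (use t0 M0 in auto)
    also have "\<dots> = (t * M)^2 * (t * M)^n" by (simp add: power_mult_distrib power_add power2_eq_square mult_ac)
    also have "\<dots> \<le> (t * M)^2 * (1/2)^n"
      by (intro mult_left_mono power_mono tM tM0) auto
    finally show ?thesis by (simp add: b_def)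
  qed
  have "(\<Sum>n. g (n + 2)) \<le> (\<Sum>n. b n)"
    by (rule suminf_le[OF hb]) (use summable_ignore_initial_segment[OF sg, of 2] sums_summable[OF bs] in auto)
  also have "\<dots> = (t * M)^2 * 2" using bs by (rule sums_unique[symmetric])
  finally have "mat_exp ((- t) *\<^sub>R A) $ u $ v \<le> 2 * (t * M)^2 - t * a"
    using split g0 g1 by simp
  also have "\<dots> < 0"
  proof -
    have "2 * (t * M)^2 = t * (a / 2)" using M0 by (simp add: t_def power2_eq_square field_simps)
    moreover have "t * a > 0" using t0 a0 by simp
    ultimately show ?thesis by linarith
  qed
  finally show ?thesis using t0 by blast
qed


lemma complete_S_nonneg:
  fixes E :: "'v::finite \<Rightarrow> 'v \<Rightarrow> bool"
  assumes sg: "simple_graph E" and cg: "complete_graph E" and t: "t \<ge> 0"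
  shows "mat_exp ((- t) *\<^sub>R (laplacian E ** laplacian E)) $ u $ v \<ge> 0"
proof -
  define N where "N = real CARD('v)"
  have N1: "N \<ge> 1" unfolding N_def by (simp add: Suc_le_eq)
  define Q :: "real^'v^'v" where "Q = (\<chi> i j. (if i = j then 1 else 0) - 1 / N)"
  have Qe: "Q $ i $ j = (if i = j then 1 else 0) - 1 / N" for i j by (simp add: Q_def)
  have QQ: "Q ** Q = Q"
  proof -
    have "(Q ** Q) $ i $ j = Q $ i $ j" for i j
    proof -
      have "(Q ** Q) $ i $ j = (\<Sum>w\<in>UNIV. (if i = w then 1 else 0) * (if w = j then 1 else 0)
            - (if i = w then 1 else 0) / N - (if w = j then 1 else 0) / N + 1 / N^2)"
        unfolding mm_entry Qe using N1 by (intro sum.cong) (auto simp: field_simps power2_eq_square)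
      also have "\<dots> = (if i = j then 1 else 0) - 1 / N - 1 / N + N / N^2"
      proof -
        have s1: "(\<Sum>w\<in>UNIV. (if i = w then 1 else 0) * (if w = j then 1 else 0)) = (if i = j then 1 else (0::real))"
          by (subst sum.cong[OF refl, of _ _ "\<lambda>w. if w = i then (if i = j then 1 else 0) else 0"]) auto
        have s2: "(\<Sum>w\<in>UNIV. (if i = w then 1 else 0) / N) = 1 / N"
          by (subst sum.cong[OF refl, of _ _ "\<lambda>w. if w = i then 1 / N else 0"]) auto
        have s3: "(\<Sum>w\<in>UNIV. (if w = j then 1 else 0) / N) = 1 / N"
          by (subst sum.cong[OF refl, of _ _ "\<lambda>w. if w = j then 1 / N else 0"]) auto
        have s4: "(\<Sum>w\<in>(UNIV::'v set). 1 / N^2) = N / N^2" by (simp add: N_def)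
        show ?thesis by (simp only: sum.distrib sum_subtractf s1 s2 s3 s4)
      qed
      also have "\<dots> = Q $ i $ j" using N1 by (simp add: Qe power2_eq_square)
      finally show ?thesis .
    qed
    then show ?thesis by (simp add: vec_eq_iff)
  qed
  have LQ: "laplacian E = N *\<^sub>R Q"
  proof -
    have "laplacian E $ i $ j = N * Q $ i $ j" for i j
    proof (cases "i = j")
      case True
      have "{w. E i w} = UNIV - {i}" using sg cg by (auto simp: simple_graph_def complete_graph_def)
      then have cN: "real (card {w. E i w}) = N - 1"
        using N1 by (simp add: N_def card_Diff_singleton of_nat_diff Suc_le_eq)
      have "laplacian E $ i $ j = N - 1" using True cN by (simp add: lap_entry)
      moreover have "N * Q $ i $ j = N - 1" using True N1 by (simp add: Qe right_diff_distrib)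
      ultimately show ?thesis by simp
    next
      case False
      then show ?thesis using cg N1 by (simp add: lap_entry Qe complete_graph_def)
    qed
    then show ?thesis by (simp add: vec_eq_iff)
  qed
  define c where "c = - t * N^2"
  have c0: "c \<le> 0" using t by (simp add: c_def)
  have A: "(- t) *\<^sub>R (laplacian E ** laplacian E) = c *\<^sub>R Q"
    by (simp add: LQ scale_mm mm_scale QQ c_def power2_eq_square)
  define q where "q = Q $ u $ v"
  define d :: real where "d = (if u = v then 1 else 0)"
  have ser: "(\<lambda>k. (1 / fact k) * mat_pow (c *\<^sub>R Q) k $ u $ v)
      = (\<lambda>k. c^k /\<^sub>R fact k * q + (if k = 0 then d - q else 0))"
    by (auto simp: fun_eq_iff mat_pow_scale mat_pow_idem[OF QQ] q_def d_def divide_inverse)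
  have "(\<lambda>k. c^k /\<^sub>R fact k * q + (if k = 0 then d - q else 0)) sums (exp c * q + (d - q))"
    by (intro sums_add sums_mult2 exp_converges) (use sums_single[of 0 "\<lambda>_. d - q"] in simp)
  then have val: "mat_exp (c *\<^sub>R Q) $ u $ v = exp c * q + (d - q)"
    by (rule sums_unique2[OF mat_exp_entry[of "c *\<^sub>R Q" u v, unfolded ser]])
  have ec: "exp c \<le> 1" "exp c > 0" using c0 by auto
  have "exp c * q + (d - q) \<ge> 0"
  proof (cases "u = v")
    case True
    then have "exp c * q + (d - q) = exp c * (1 - 1/N) + 1/N" by (simp add: q_def d_def Qe)
    moreover have "1 - 1/N \<ge> 0" using N1 by simp
    moreover have "exp c * (1 - 1/N) \<ge> 0" using ec \<open>1 - 1/N \<ge> 0\<close> by simp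
    moreover have "1/N \<ge> 0" using N1 by simp
    ultimately show ?thesis by linarith
  next
    case False
    then have "exp c * q + (d - q) = (1 - exp c) / N" by (simp add: q_def d_def Qe diff_divide_distrib)
    moreover have "(1 - exp c) / N \<ge> 0" using ec N1 by simp
    ultimately show ?thesis by linarith
  qed
  then show ?thesis using A val by simp
qed


lemma sup_norm_ge: "cmod (f v) \<le> sup_norm f"
  unfolding sup_norm_def by (rule Max_ge) auto

lemma sup_norm_le: "(\<And>v. cmod (f v) \<le> b) \<Longrightarrow> sup_norm f \<le> b"
  unfolding sup_norm_def by (subst Max_le_iff) auto

theorem proposition2p3:
  fixes E :: "'v::finite \<Rightarrow> 'v \<Rightarrow> bool"
  assumes "simple_graph E" and "connected_graph E"
  defines "S \<equiv> (\<lambda>t::real. mat_exp ((- t) *\<^sub>R (laplacian E ** laplacian E)))"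
  shows "(complete_graph E
            \<longleftrightarrow> (\<forall>t\<ge>0. \<forall>f::'v \<Rightarrow> complex. (\<forall>v. f v \<in> \<real> \<and> Re (f v) \<ge> 0)
                    \<longrightarrow> (\<forall>u. mat_act (S t) f u \<in> \<real> \<and> Re (mat_act (S t) f u) \<ge> 0)))
       \<and> (complete_graph E
            \<longleftrightarrow> (\<forall>t\<ge>0. \<forall>f::'v \<Rightarrow> complex. sup_norm (mat_act (S t) f) \<le> sup_norm f))"
proof -
  note sg = assms(1)
  have rows: "(\<Sum>v\<in>UNIV. S t $ u $ v) = 1" for t u
    unfolding S_def by (rule S_rowsum[OF sg])
  have P1: "mat_act (S t) f u \<in> \<real> \<and> Re (mat_act (S t) f u) \<ge> 0"
    if cg: "complete_graph E" and t: "t \<ge> 0" and f: "\<forall>v. f v \<in> \<real> \<and> Re (f v) \<ge> 0" for t f u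
  proof -
    have fv: "f v = of_real (Re (f v))" for v using f by simp
    have eq: "mat_act (S t) f u = of_real (\<Sum>v\<in>UNIV. S t $ u $ v * Re (f v))"
      unfolding mat_act_def by (subst fv) simp
    moreover have "(\<Sum>v\<in>UNIV. S t $ u $ v * Re (f v)) \<ge> 0"
      using complete_S_nonneg[OF sg cg t] f unfolding S_def by (intro sum_nonneg mult_nonneg_nonneg) auto
    ultimately show ?thesis by simp
  qed
  have C1: "sup_norm (mat_act (S t) f) \<le> sup_norm f"
    if cg: "complete_graph E" and t: "t \<ge> 0" for t f
  proof (rule sup_norm_le)
    fix u
    have nn: "S t $ u $ v \<ge> 0" for v using complete_S_nonneg[OF sg cg t] unfolding S_def by simp
    have "cmod (mat_act (S t) f u) \<le> (\<Sum>v\<in>UNIV. cmod (complex_of_real (S t $ u $ v) * f v))"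
      unfolding mat_act_def by (rule norm_sum)
    also have "\<dots> = (\<Sum>v\<in>UNIV. S t $ u $ v * cmod (f v))"
      using nn by (simp add: norm_mult)
    also have "\<dots> \<le> (\<Sum>v\<in>UNIV. S t $ u $ v * sup_norm f)"
      using nn by (intro sum_mono mult_left_mono sup_norm_ge) auto
    also have "\<dots> = sup_norm f" using rows by (simp add: sum_distrib_right[symmetric])
    finally show "cmod (mat_act (S t) f u) \<le> sup_norm f" .
  qed
  have neg: "\<exists>t>0. \<exists>u v. S t $ u $ v < 0" if ncg: "\<not> complete_graph E"
  proof -
    obtain u v w where uvw: "u \<noteq> v" "\<not> E u v" "E u w" "E w v"
      using dist2[OF sg assms(2) ncg] by blast
    have "(laplacian E ** laplacian E) $ u $ v > 0" by (rule L2_pos[OF sg uvw])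
    from neg_entry[OF uvw(1) this] show ?thesis unfolding S_def by blast
  qed
  have P2: "False" if ncg: "\<not> complete_graph E"
    and P: "\<forall>t\<ge>0. \<forall>f::'v \<Rightarrow> complex. (\<forall>v. f v \<in> \<real> \<and> Re (f v) \<ge> 0)
                    \<longrightarrow> (\<forall>u. mat_act (S t) f u \<in> \<real> \<and> Re (mat_act (S t) f u) \<ge> 0)"
  proof -
    obtain t u v where t: "t > 0" and n: "S t $ u $ v < 0" using neg[OF ncg] by blast
    define f :: "'v \<Rightarrow> complex" where "f x = (if x = v then 1 else 0)" for x
    have eq: "mat_act (S t) f u = of_real (S t $ u $ v)"
      unfolding mat_act_def f_def by (simp add: if_distrib cong: if_cong)
    moreover have "Re (mat_act (S t) f u) \<ge> 0" using P t by (auto simp: f_def)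
    ultimately show False using n by simp
  qed
  have C2: "False" if ncg: "\<not> complete_graph E"
    and C: "\<forall>t\<ge>0. \<forall>f::'v \<Rightarrow> complex. sup_norm (mat_act (S t) f) \<le> sup_norm f"
  proof -
    obtain t u v where t: "t > 0" and n: "S t $ u $ v < 0" using neg[OF ncg] by blast
    define f :: "'v \<Rightarrow> complex" where "f x = of_real (if S t $ u $ x \<ge> 0 then 1 else -1)" for x
    have sf: "sup_norm f = 1"
    proof -
      have "range (\<lambda>x. cmod (f x)) = {1}" by (auto simp: f_def)
      then show ?thesis by (simp add: sup_norm_def)
    qed
    have eq: "mat_act (S t) f u = of_real (\<Sum>x\<in>UNIV. \<bar>S t $ u $ x\<bar>)"
    proof -
      have "complex_of_real (S t $ u $ x) * f x = of_real \<bar>S t $ u $ x\<bar>" for x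
        by (simp add: f_def)
      then show ?thesis unfolding mat_act_def by simp
    qed
    have s0: "(\<Sum>x\<in>UNIV. \<bar>S t $ u $ x\<bar>) \<ge> 0" by (simp add: sum_nonneg)
    have "cmod (mat_act (S t) f u) = (\<Sum>x\<in>UNIV. \<bar>S t $ u $ x\<bar>)"
      unfolding eq norm_of_real using s0 by (rule abs_of_nonneg)
    moreover have "(\<Sum>x\<in>UNIV. S t $ u $ x) < (\<Sum>x\<in>UNIV. \<bar>S t $ u $ x\<bar>)"
      proof (rule sum_strict_mono_ex1)
      show "\<exists>a\<in>UNIV. S t $ u $ a < \<bar>S t $ u $ a\<bar>" using n by (intro bexI[of _ v]) auto
    qed auto
    ultimately have "cmod (mat_act (S t) f u) > 1" using rows by simp
    moreover have "cmod (mat_act (S t) f u) \<le> 1" 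
    proof -
      have "sup_norm (mat_act (S t) f) \<le> sup_norm f" using C t by simp
      then show ?thesis using sup_norm_ge[of "mat_act (S t) f" u] sf by linarith
    qed
    ultimately show False by simp
  qed
  show ?thesis using P1 C1 P2 C2 by blast
qed

end
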